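(* Let $\alpha,\beta>0$, $\xi\sim\mathrm{Beta}(\alpha,\beta)$, let $s>-1$ be real, $a\in\mathbb{C}$, and $k>-\alpha$ real. Then $$\mathbb{E}\left[\frac{\xi^k}{(1+s\sqrt{\xi})^a}\right]=\frac{(\alpha)_k}{(\alpha+\beta)_k}\Bigg[{}_3F_2\!\left(\begin{matrix}\frac a2,\ \frac{a+1}{2},\ \alpha+k\\ \frac12,\ \alpha+\beta+k\end{matrix};s^2\right)-sa\frac{(\alpha+k)_{1/2}}{(\alpha+\beta+k)_{1/2}}\,{}_3F_2\!\left(\begin{matrix}\frac{a+1}{2},\ \frac{a+2}{2},\ \alpha+k+\frac12\\ \frac32,\ \alpha+\beta+k+\frac12\end{matrix};s^2\right)\Bigg].$$ In particular, for $\beta=(p-1)\alpha$ with $p\ge2$ an integer, $k=0$, $a=1$: $$\mathbb{E}\left[\frac{1}{1+s\sqrt{\xi}}\right]={}_2F_1\!\left(\begin{matrix}1,\ \alpha\\ p\alpha\end{matrix};s^2\right)-s\frac{(\alpha)_{1/2}}{(p\alpha)_{1/2}}\,{}_2F_1\!\left(\begin{matrix}1,\ \alpha+\frac12\\ p\alpha+\frac12\end{matrix};s^2\right).$$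
   Context: $(x)_a=\Gamma(x+a)/\Gamma(x)$ denotes the Pochhammer symbol. ${}_3F_2\!\left(\begin{matrix}a_1,a_2,a_3\\ b_1,b_2\end{matrix};t\right)=\sum_{n\ge0}\frac{(a_1)_n(a_2)_n(a_3)_n}{(b_1)_n(b_2)_n}\frac{t^n}{n!}$ and ${}_2F_1$ is the Gauss hypergeometric function, understood via analytic continuation outside the disc of convergence of the series. *)

theory Defs
  imports "HOL-Probability.Probability" "HOL-Complex_Analysis.Complex_Analysis"
begin

definition poch_r :: "real \<Rightarrow> real \<Rightarrow> real" where
  "poch_r x a = Gamma (x + a) / Gamma x"

definition hyp3F2 :: "complex \<Rightarrow> complex \<Rightarrow> complex \<Rightarrow> complex \<Rightarrow> complex \<Rightarrow> complex \<Rightarrow> complex" where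
  "hyp3F2 a1 a2 a3 b1 b2 t =
     (\<Sum>n. pochhammer a1 n * pochhammer a2 n * pochhammer a3 n
            / (pochhammer b1 n * pochhammer b2 n) * t ^ n / fact n)"

definition hyp2F1 :: "complex \<Rightarrow> complex \<Rightarrow> complex \<Rightarrow> complex \<Rightarrow> complex" where
  "hyp2F1 a1 a2 b1 t =
     (\<Sum>n. pochhammer a1 n * pochhammer a2 n / pochhammer b1 n * t ^ n / fact n)"

definition beta_density :: "real \<Rightarrow> real \<Rightarrow> real \<Rightarrow> real" where
  "beta_density \<alpha> \<beta> x =
     (if 0 < x \<and> x < 1 then x powr (\<alpha> - 1) * (1 - x) powr (\<beta> - 1) / Beta \<alpha> \<beta> else 0)"

end

theory Submission
  imports Defs
begin

lemma param_holo:
  fixes w :: "real \<Rightarrow> real" and h h' :: "complex \<Rightarrow> real \<Rightarrow> complex" and U :: "complex set"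
  assumes U: "open U"
    and w: "integrable lborel w" and w0: "\<And>x. x \<notin> {0..1} \<Longrightarrow> w x = 0"
    and hd: "\<And>z x. z \<in> U \<Longrightarrow> x \<in> {0..1} \<Longrightarrow> ((\<lambda>z. h z x) has_field_derivative h' z x) (at z)"
    and hc': "continuous_on (U \<times> {0..1}) (\<lambda>(z,x). h' z x)"
    and hc: "\<And>z. z \<in> U \<Longrightarrow> continuous_on {0..1} (h z)"
  shows "(\<lambda>z. LINT x|lborel. w x *\<^sub>R h z x) holomorphic_on U"
proof -
  have wm: "w \<in> borel_measurable borel" using w by auto
  have intg: "integrable lborel (\<lambda>x. w x *\<^sub>R g x)" if gc: "continuous_on {0..1} g" for g :: "real \<Rightarrow> complex"
  proof -
    have eq: "(\<lambda>x. w x *\<^sub>R g x) = (\<lambda>x. w x *\<^sub>R (indicator {0..1} x *\<^sub>R g x))"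
      using w0 by (auto simp: indicator_def fun_eq_iff)
    have m: "(\<lambda>x. indicator {0..1::real} x *\<^sub>R g x) \<in> borel_measurable borel"
      by (rule borel_measurable_continuous_on_indicator) (use gc in auto)
    obtain B0 where B0: "\<forall>y\<in>g ` {0..1}. norm y \<le> B0"
      using compact_imp_bounded[OF compact_continuous_image[OF gc compact_Icc]]
      by (auto simp: bounded_iff)
    then have B: "\<And>x. x \<in> {0..1} \<Longrightarrow> norm (g x) \<le> B0" by blast
    show ?thesis
      unfolding eq
    proof (rule Bochner_Integration.integrable_bound[where f="\<lambda>x. B0 * w x"])
      show "integrable lborel (\<lambda>x. B0 * w x)" using w by auto
      show "(\<lambda>x. w x *\<^sub>R (indicator {0..1} x *\<^sub>R g x)) \<in> borel_measurable lborel"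
        using borel_measurable_scaleR[OF wm m] by simp
      show "AE x in lborel. norm (w x *\<^sub>R (indicator {0..1} x *\<^sub>R g x)) \<le> norm (B0 * w x)"
      proof (intro AE_I2)
        fix x :: real
        show "norm (w x *\<^sub>R (indicator {0..1} x *\<^sub>R g x)) \<le> norm (B0 * w x)"
        proof (cases "x \<in> {0..1}")
          case True
          then have "norm (g x) \<le> B0" by (rule B)
          then have "\<bar>w x\<bar> * norm (g x) \<le> \<bar>w x\<bar> * \<bar>B0\<bar>"
            by (intro mult_left_mono) auto
          then show ?thesis using True by (simp add: abs_mult mult_ac)
        qed simp
      qed
    qed
  qed
  show ?thesis
    unfolding holomorphic_on_def
  proof
    fix z0 assume z0: "z0 \<in> U"
    define D where "D = (LINT x|lborel. w x *\<^sub>R h' z0 x)"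
    obtain r where r: "r > 0" "cball z0 r \<subseteq> U" using U z0 open_contains_cball by blast
    have cK: "compact (cball z0 r \<times> {0..1::real})" by (intro compact_Times) auto
    have ucK: "uniformly_continuous_on (cball z0 r \<times> {0..1}) (\<lambda>(z,x). h' z x)"
      by (rule compact_uniformly_continuous[OF continuous_on_subset[OF hc'] cK]) (use r in auto)
    have h'c: "continuous_on {0..1} (h' z)" if "z \<in> U" for z
      by (rule continuous_on_compose2[OF hc', of _ "\<lambda>x. (z, x)", simplified])
         (use that in \<open>auto intro!: continuous_intros\<close>)
    have "((\<lambda>y. (G y - G z0) / (y - z0)) \<longlongrightarrow> D) (at z0)"
      if G_def: "G = (\<lambda>z. LINT x|lborel. w x *\<^sub>R h z x)" for G
    proof (rule tendstoI)
      fix e :: real assume e: "e > 0"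
      define L where "L = (LINT x|lborel. norm (w x)) + 1"
      have L: "L > 0" unfolding L_def by (smt (verit) integral_nonneg_AE AE_I2 norm_ge_zero)
      define \<epsilon> where "\<epsilon> = e / (2 * L)"
      have eps: "\<epsilon> > 0" using e L by (simp add: \<epsilon>_def)
      obtain \<delta> where d: "\<delta> > 0" and dK: "\<And>p q. p \<in> cball z0 r \<times> {0..1} \<Longrightarrow> q \<in> cball z0 r \<times> {0..1}
          \<Longrightarrow> dist q p < \<delta> \<Longrightarrow> dist ((\<lambda>(z,x). h' z x) q) ((\<lambda>(z,x). h' z x) p) < \<epsilon>"
        using ucK eps unfolding uniformly_continuous_on_def by metis
      define d where "d = min r \<delta>"
      have "d > 0" using d r by (simp add: d_def)
      have bound: "norm (h y x - h z0 x - (y - z0) * h' z0 x) \<le> \<epsilon> * norm (y - z0)"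
        if y: "y \<in> ball z0 d" and x: "x \<in> {0..1}" for y x
      proof -
        have "norm ((h y x - y * h' z0 x) - (h z0 x - z0 * h' z0 x)) \<le> \<epsilon> * norm (y - z0)"
        proof (rule field_differentiable_bound[where f="\<lambda>u. h u x - u * h' z0 x"
                  and f'="\<lambda>u. h' u x - h' z0 x" and S="ball z0 d"])
          fix u assume u: "u \<in> ball z0 d"
          then have uU: "u \<in> U" using r by (auto simp: d_def)
          show "((\<lambda>u. h u x - u * h' z0 x) has_field_derivative h' u x - h' z0 x) (at u within ball z0 d)"
            by (rule has_field_derivative_at_within, rule derivative_eq_intros hd[OF uU x])+
               (auto intro!: derivative_eq_intros)
          have "dist (u, x) (z0, x) < \<delta>" using u by (simp add: dist_Pair_Pair d_def dist_commute)
          then have "dist (h' u x) (h' z0 x) < \<epsilon>"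
            using dK[of "(z0,x)" "(u,x)"] u x r by (auto simp: d_def)
          then show "norm (h' u x - h' z0 x) \<le> \<epsilon>" by (simp add: dist_norm)
        qed (use y \<open>d > 0\<close> in auto)
        then show ?thesis by (simp add: algebra_simps)
      qed
      have main: "\<forall>y. y \<noteq> z0 \<and> dist y z0 < d \<longrightarrow> dist ((G y - G z0) / (y - z0)) D < e"
      proof (intro allI impI)
        fix y assume y: "y \<noteq> z0 \<and> dist y z0 < d"
        then have yU: "y \<in> U" using r by (auto simp: d_def dist_commute)
        have i1: "integrable lborel (\<lambda>x. w x *\<^sub>R h y x)" by (rule intg[OF hc[OF yU]])
        have i0: "integrable lborel (\<lambda>x. w x *\<^sub>R h z0 x)" by (rule intg[OF hc[OF z0]])
        have i2: "integrable lborel (\<lambda>x. w x *\<^sub>R h' z0 x)" by (rule intg[OF h'c[OF z0]])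
        have yz: "y - z0 \<noteq> 0" using y by simp
        have eqi: "(\<lambda>x. w x *\<^sub>R ((h y x - h z0 x - (y - z0) * h' z0 x) / (y - z0))) =
              (\<lambda>x. ((w x *\<^sub>R h y x - w x *\<^sub>R h z0 x) - (y - z0) * (w x *\<^sub>R h' z0 x)) / (y - z0))"
          by (rule ext) (simp add: scaleR_conv_of_real right_diff_distrib)
        have i3: "integrable lborel (\<lambda>x. (w x *\<^sub>R h y x - w x *\<^sub>R h z0 x) - (y - z0) * (w x *\<^sub>R h' z0 x))"
          by (intro Bochner_Integration.integrable_diff i1 i0 integrable_mult_right i2)
        have "(LINT x|lborel. w x *\<^sub>R ((h y x - h z0 x - (y - z0) * h' z0 x) / (y - z0)))
             = (G y - G z0 - (y - z0) * D) / (y - z0)"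
          unfolding eqi integral_divide_zero
          by (subst Bochner_Integration.integral_diff, intro Bochner_Integration.integrable_diff i1 i0,
              intro integrable_mult_right i2,
              subst Bochner_Integration.integral_diff[OF i1 i0],
              subst integral_mult_right_zero, simp add: G_def D_def)
        also have "\<dots> = (G y - G z0) / (y - z0) - D"
          using yz by (simp add: diff_divide_distrib)
        finally have "(G y - G z0) / (y - z0) - D =
              (LINT x|lborel. w x *\<^sub>R ((h y x - h z0 x - (y - z0) * h' z0 x) / (y - z0)))" by simp
        also have "norm \<dots> \<le> (LINT x|lborel. norm (w x) * \<epsilon>)"
        proof (rule Bochner_Integration.integral_norm_bound_integral)
          show "integrable lborel (\<lambda>x. norm (w x) * \<epsilon>)" using w by auto
          show "integrable lborel (\<lambda>x. w x *\<^sub>R ((h y x - h z0 x - (y - z0) * h' z0 x) / (y - z0)))"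
            unfolding eqi using i3 by (rule integrable_divide_zero)
          fix x
          show "norm (w x *\<^sub>R ((h y x - h z0 x - (y - z0) * h' z0 x) / (y - z0))) \<le> norm (w x) * \<epsilon>"
          proof (cases "x \<in> {0..1}")
            case True
            have "norm ((h y x - h z0 x - (y - z0) * h' z0 x) / (y - z0)) \<le> \<epsilon>"
              using bound[of y x] y True by (simp add: norm_divide divide_le_eq dist_commute)
            then show ?thesis by (simp add: mult_left_mono)
          qed (simp add: w0)
        qed
        also have "\<dots> = \<epsilon> * (L - 1)" by (simp add: L_def)
        also have "\<dots> < e" using e L eps by (simp add: \<epsilon>_def field_simps) (smt (verit) mult_pos_pos)
        finally show "dist ((G y - G z0) / (y - z0)) D < e" by (simp add: dist_norm)
      qed
      show "\<forall>\<^sub>F y in at z0. dist ((G y - G z0) / (y - z0)) D < e"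
        unfolding eventually_at using main \<open>d > 0\<close> by blast
    qed
    from this[OF refl]
    have "((\<lambda>z. LINT x|lborel. w x *\<^sub>R h z x) has_field_derivative D) (at z0)"
      by (simp only: has_field_derivative_iff)
    then show "(\<lambda>z. LINT x|lborel. w x *\<^sub>R h z x) field_differentiable at z0 within U"
      unfolding field_differentiable_def by (blast intro: has_field_derivative_at_within)
  qed
qed

lemma pos_re: "Re z > -1 \<Longrightarrow> x \<in> {0..1} \<Longrightarrow> Re (1 + z * complex_of_real (sqrt x)) > 0"
proof -
  assume z: "Re z > -1" and x: "x \<in> {0..1}"
  have s: "0 \<le> sqrt x" "sqrt x \<le> 1" using x by auto
  have "Re (1 + z * complex_of_real (sqrt x)) = 1 + Re z * sqrt x" by simp
  also have "\<dots> > 0"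
  proof (cases "Re z \<ge> 0")
    case True then show ?thesis using s by (simp add: add_pos_nonneg)
  next
    case False
    then have "Re z * sqrt x \<ge> Re z * 1" using s by (intro mult_left_mono_neg) auto
    then show ?thesis using z by simp
  qed
  finally show ?thesis .
qed

lemma cont_pw: "continuous_on ({z. Re z > -1} \<times> {0..1}) (\<lambda>(z,x). (1 + z * complex_of_real (sqrt x)) powr b)"
proof -
  have "continuous_on ({z. Re z > -1} \<times> {0..1}) (\<lambda>p. (1 + fst p * complex_of_real (sqrt (snd p))) powr b)"
  proof (rule continuous_on_powr_complex)
    show "{z. - 1 < Re z} \<times> {0..1} \<subseteq> {p. 0 \<le> Re (1 + fst p * complex_of_real (sqrt (snd p))) \<or> Im (1 + fst p * complex_of_real (sqrt (snd p))) \<noteq> 0}"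
      using pos_re by (force simp del: Re_complex_of_real plus_complex.sel times_complex.sel)
    fix p assume "p \<in> {z. - 1 < Re z} \<times> {0..(1::real)}" "1 + fst p * complex_of_real (sqrt (snd p)) = 0"
    then show "0 < Re b" using pos_re[of "fst p" "snd p"] by auto
  qed (auto intro!: continuous_intros)
  then show ?thesis by (simp add: split_beta)
qed

lemma wint:
  fixes w :: "real \<Rightarrow> real" and g :: "real \<Rightarrow> complex"
  assumes w: "integrable lborel w" and w0: "\<And>x. x \<notin> {0..1} \<Longrightarrow> w x = 0"
    and gc: "continuous_on {0..1} g"
  shows "integrable lborel (\<lambda>x. w x *\<^sub>R g x)"
proof -
  have wm: "w \<in> borel_measurable borel" using w by auto
  have eq: "(\<lambda>x. w x *\<^sub>R g x) = (\<lambda>x. w x *\<^sub>R (indicator {0..1} x *\<^sub>R g x))"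
    using w0 by (auto simp: indicator_def fun_eq_iff)
  have m: "(\<lambda>x. indicator {0..1::real} x *\<^sub>R g x) \<in> borel_measurable borel"
    by (rule borel_measurable_continuous_on_indicator) (use gc in auto)
  obtain B0 where B0: "\<forall>y\<in>g ` {0..1}. norm y \<le> B0"
    using compact_imp_bounded[OF compact_continuous_image[OF gc compact_Icc]]
    by (auto simp: bounded_iff)
  then have B: "\<And>x. x \<in> {0..1} \<Longrightarrow> norm (g x) \<le> B0" by blast
  show ?thesis
    unfolding eq
  proof (rule Bochner_Integration.integrable_bound[where f="\<lambda>x. B0 * w x"])
    show "integrable lborel (\<lambda>x. B0 * w x)" using w by auto
    show "(\<lambda>x. w x *\<^sub>R (indicator {0..1} x *\<^sub>R g x)) \<in> borel_measurable lborel"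
      using borel_measurable_scaleR[OF wm m] by simp
    show "AE x in lborel. norm (w x *\<^sub>R (indicator {0..1} x *\<^sub>R g x)) \<le> norm (B0 * w x)"
    proof (intro AE_I2)
      fix x :: real
      show "norm (w x *\<^sub>R (indicator {0..1} x *\<^sub>R g x)) \<le> norm (B0 * w x)"
      proof (cases "x \<in> {0..1}")
        case True
        then have "norm (g x) \<le> B0" by (rule B)
        then have "\<bar>w x\<bar> * norm (g x) \<le> \<bar>w x\<bar> * \<bar>B0\<bar>"
          by (intro mult_left_mono) auto
        then show ?thesis using True by (simp add: abs_mult mult_ac)
      qed simp
    qed
  qed
qed

lemma Beta_pos: "a > 0 \<Longrightarrow> b > 0 \<Longrightarrow> Beta a b > (0::real)"
  unfolding Beta_def by (intro divide_pos_pos mult_pos_pos Gamma_real_pos) auto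

lemma bd_nonneg: "\<alpha> > 0 \<Longrightarrow> \<beta> > 0 \<Longrightarrow> beta_density \<alpha> \<beta> x \<ge> 0"
  unfolding beta_density_def using Beta_pos[of \<alpha> \<beta>] by auto

lemma bd_meas[measurable]: "(\<lambda>x. beta_density al be x) \<in> borel_measurable borel"
  unfolding beta_density_def by measurable

lemma w_eq:
  assumes "\<alpha> > 0" "\<beta> > 0"
  shows "beta_density \<alpha> \<beta> x * x powr k =
     indicator {0..1} x *\<^sub>R (x powr (\<alpha> + k - 1) * (1 - x) powr (\<beta> - 1)) / Beta \<alpha> \<beta>"
proof (cases "0 < x \<and> x < 1")
  case True
  then show ?thesis by (simp add: beta_density_def powr_add[symmetric] indicator_def algebra_simps)
next
  case False
  then show ?thesis by (auto simp: beta_density_def indicator_def)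
qed

lemma w_integrable:
  assumes "\<alpha> > 0" "\<beta> > 0" "k > -\<alpha>"
  shows "integrable lborel (\<lambda>x. beta_density \<alpha> \<beta> x * x powr k)"
proof -
  have "set_integrable lborel {0..1} (\<lambda>t. t powr (\<alpha> + k - 1) * (1 - t) powr (\<beta> - 1))"
    using integrable_Beta[of "\<alpha> + k" \<beta>] assms by (simp add: algebra_simps)
  then have "integrable lborel (\<lambda>x. indicator {0..1} x *\<^sub>R (x powr (\<alpha> + k - 1) * (1 - x) powr (\<beta> - 1)) / Beta \<alpha> \<beta>)"
    unfolding set_integrable_def by (rule integrable_divide_zero)
  then show ?thesis using w_eq[OF assms(1,2)] by simp
qed

lemma w_zero: "x \<notin> {0..1} \<Longrightarrow> beta_density \<alpha> \<beta> x * x powr k = 0"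
  by (auto simp: beta_density_def)

lemma transfer:
  fixes f :: "real \<Rightarrow> complex"
  assumes D: "distributed M lborel \<xi> (\<lambda>x. ennreal (beta_density \<alpha> \<beta> x))"
    and ab: "\<alpha> > 0" "\<beta> > 0" and f: "f \<in> borel_measurable borel"
  shows "(\<integral>\<omega>. f (\<xi> \<omega>) \<partial>M) = (LINT x|lborel. beta_density \<alpha> \<beta> x *\<^sub>R f x)"
proof -
  have "(\<integral>\<omega>. f (\<xi> \<omega>) \<partial>M) = integral\<^sup>L (distr M lborel \<xi>) f"
    using distributed_measurable[OF D] f by (subst integral_distr) auto
  also have "\<dots> = integral\<^sup>L (density lborel (\<lambda>x. ennreal (beta_density \<alpha> \<beta> x))) f"
    using distributed_distr_eq_density[OF D] by simp
  also have "\<dots> = (LINT x|lborel. beta_density \<alpha> \<beta> x *\<^sub>R f x)"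
    using f bd_nonneg[OF ab] by (subst integral_density) auto
  finally show ?thesis .
qed

definition FF :: "'w measure \<Rightarrow> ('w \<Rightarrow> real) \<Rightarrow> real \<Rightarrow> complex \<Rightarrow> complex \<Rightarrow> complex" where
  "FF M \<xi> k a z = (\<integral>\<omega>. complex_of_real (\<xi> \<omega> powr k) / (1 + z * complex_of_real (sqrt (\<xi> \<omega>))) powr a \<partial>M)"

lemma FF_eq:
  assumes D: "distributed M lborel \<xi> (\<lambda>x. ennreal (beta_density \<alpha> \<beta> x))"
    and ab: "\<alpha> > 0" "\<beta> > 0"
  shows "FF M \<xi> k a z = (LINT x|lborel. (beta_density \<alpha> \<beta> x * x powr k) *\<^sub>R (1 + z * complex_of_real (sqrt x)) powr (-a))"
proof -
  have "FF M \<xi> k a z = (LINT x|lborel. beta_density \<alpha> \<beta> x *\<^sub>R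
      (complex_of_real (x powr k) / (1 + z * complex_of_real (sqrt x)) powr a))"
    unfolding FF_def by (rule transfer[OF D ab]) measurable
  also have "\<dots> = (LINT x|lborel. (beta_density \<alpha> \<beta> x * x powr k) *\<^sub>R (1 + z * complex_of_real (sqrt x)) powr (-a))"
    by (rule Bochner_Integration.integral_cong) (auto simp: powr_minus scaleR_conv_of_real divide_inverse)
  finally show ?thesis .
qed

lemma FF_holo:
  assumes D: "distributed M lborel \<xi> (\<lambda>x. ennreal (beta_density \<alpha> \<beta> x))"
    and ab: "\<alpha> > 0" "\<beta> > 0" and k: "k > -\<alpha>"
  shows "FF M \<xi> k a holomorphic_on {z. Re z > -1}"
proof -
  have "(\<lambda>z. LINT x|lborel. (beta_density \<alpha> \<beta> x * x powr k) *\<^sub>R (1 + z * complex_of_real (sqrt x)) powr (-a))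
        holomorphic_on {z. Re z > -1}"
  proof (rule param_holo[where h'="\<lambda>z x. (-a) * (1 + z * complex_of_real (sqrt x)) powr (-a - 1) * complex_of_real (sqrt x)"])
    show "open {z. Re z > -1}" by (simp add: open_halfspace_Re_gt)
    show "integrable lborel (\<lambda>x. beta_density \<alpha> \<beta> x * x powr k)" by (rule w_integrable[OF ab k])
    show "\<And>x. x \<notin> {0..1} \<Longrightarrow> beta_density \<alpha> \<beta> x * x powr k = 0" by (rule w_zero)
    fix z x assume z: "z \<in> {z. Re z > -1}" and x: "x \<in> {0..(1::real)}"
    have "1 + z * complex_of_real (sqrt x) \<notin> \<real>\<^sub>\<le>\<^sub>0"
      using pos_re[of z x] z x by (auto simp: complex_nonpos_Reals_iff)
    then show "((\<lambda>z. (1 + z * complex_of_real (sqrt x)) powr - a) has_field_derivative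
             (-a) * (1 + z * complex_of_real (sqrt x)) powr (-a - 1) * complex_of_real (sqrt x)) (at z)"
      by (auto intro!: derivative_eq_intros)
  next
    have c1: "continuous_on ({z. Re z > -1} \<times> {0..1}) (\<lambda>p. (1 + fst p * complex_of_real (sqrt (snd p))) powr (-a-1))"
      using cont_pw[of "-a-1"] by (simp add: split_beta)
    have c2: "continuous_on ({z. Re z > -1} \<times> {0..1::real}) (\<lambda>p. complex_of_real (sqrt (snd p)))"
      by (intro continuous_intros)
    show "continuous_on ({z. Re z > -1} \<times> {0..1})
       (\<lambda>(z, x). - a * (1 + z * complex_of_real (sqrt x)) powr (- a - 1) * complex_of_real (sqrt x))"
      using continuous_on_mult[OF continuous_on_mult[OF continuous_on_const[of _ "-a"] c1] c2]
      by (simp add: split_beta)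
  next
    fix z :: complex assume z: "z \<in> {z. Re z > -1}"
    show "continuous_on {0..1} (\<lambda>x. (1 + z * complex_of_real (sqrt x)) powr - a)"
    proof (rule continuous_on_powr_complex)
      show "{0..1} \<subseteq> {x. 0 \<le> Re (1 + z * complex_of_real (sqrt x)) \<or> Im (1 + z * complex_of_real (sqrt x)) \<noteq> 0}"
        using pos_re[of z] z by (force simp del: Re_complex_of_real plus_complex.sel times_complex.sel)
      fix x :: real assume "x \<in> {0..1}" "1 + z * complex_of_real (sqrt x) = 0"
      then show "0 < Re (-a)" using pos_re[of z x] z by auto
    qed (auto intro!: continuous_intros)
  qed
  then show ?thesis
    by (rule holomorphic_transform) (simp add: FF_eq[OF D ab])
qed

lemma sqrt_pow_powr: "x > 0 \<Longrightarrow> sqrt x ^ m = x powr (real m / 2)"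
proof -
  assume x: "x > 0"
  have "sqrt x ^ m = (x powr (1/2)) ^ m" using x by (simp add: powr_half_sqrt)
  also have "\<dots> = (x powr (1/2)) powr real m" using x by (simp add: powr_realpow)
  also have "\<dots> = x powr (real m / 2)" by (simp add: powr_powr)
  finally show ?thesis .
qed

lemma moment:
  assumes ab: "\<alpha> > 0" "\<beta> > 0" and k: "k > -\<alpha>"
  shows "(LINT x|lborel. beta_density \<alpha> \<beta> x * x powr k * sqrt x ^ m) = Beta (\<alpha> + k + real m / 2) \<beta> / Beta \<alpha> \<beta>"
proof -
  define f where "f = (\<lambda>x. x powr (\<alpha> + k + real m / 2 - 1) * (1 - x) powr (\<beta> - 1))"
  have pt: "beta_density \<alpha> \<beta> x * x powr k * sqrt x ^ m = indicator {0..1} x *\<^sub>R f x / Beta \<alpha> \<beta>" for x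
  proof (cases "0 < x \<and> x < 1")
    case True
    then show ?thesis
      by (simp add: beta_density_def f_def sqrt_pow_powr powr_add[symmetric] indicator_def algebra_simps)
  next
    case False
    then show ?thesis by (auto simp: beta_density_def indicator_def f_def)
  qed
  have pa: "\<alpha> + k + real m / 2 > 0" using k by simp
  have si: "set_integrable lborel {0..1} f"
    using integrable_Beta[OF pa ab(2)] by (simp add: f_def)
  have "(LINT x|lborel. beta_density \<alpha> \<beta> x * x powr k * sqrt x ^ m) = (LINT x|lborel. indicator {0..1} x *\<^sub>R f x) / Beta \<alpha> \<beta>"
    by (simp add: pt)
  also have "(LINT x|lborel. indicator {0..1} x *\<^sub>R f x) = integral {0..1} f"
    using set_borel_integral_eq_integral(2)[OF si] by (simp add: set_lebesgue_integral_def)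
  also have "\<dots> = Beta (\<alpha> + k + real m / 2) \<beta>"
    using has_integral_Beta_real[OF pa ab(2)] by (simp add: f_def integral_unique)
  finally show ?thesis .
qed

lemma Gamma_ne: assumes "x > 0" shows "Gamma (x::real) \<noteq> 0"
proof -
  have "Gamma x > 0" using assms by (rule Gamma_real_pos)
  then show ?thesis by simp
qed

lemma poch_real_Gamma: "x > 0 \<Longrightarrow> pochhammer (x::real) n = Gamma (x + real n) / Gamma x"
  by (rule pochhammer_Gamma) (auto elim!: nonpos_Ints_cases)

lemma coefE:
  assumes ab: "\<alpha> > 0" "\<beta> > 0" and k: "k > -\<alpha>"
  shows "poch_r \<alpha> k / poch_r (\<alpha> + \<beta>) k * pochhammer (\<alpha> + k) n / pochhammer (\<alpha> + \<beta> + k) n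
       = Beta (\<alpha> + k + real (2 * n) / 2) \<beta> / Beta \<alpha> \<beta>"
proof -
  define A where "A = \<alpha> + k"
  define C where "C = \<alpha> + \<beta> + k"
  define E where "E = \<alpha> + \<beta>"
  have p: "A > 0" "C > 0" "E > 0" "A + real n > 0" "C + real n > 0"
    using ab k by (auto simp: A_def C_def E_def)
  have P1: "pochhammer (\<alpha> + k) n = Gamma (A + real n) / Gamma A" using poch_real_Gamma[OF p(1)] by (simp add: A_def)
  have P2: "pochhammer (\<alpha> + \<beta> + k) n = Gamma (C + real n) / Gamma C" using poch_real_Gamma[OF p(2)] by (simp add: C_def)
  have B1: "Beta (\<alpha> + k + real (2 * n) / 2) \<beta> = Gamma (A + real n) * Gamma \<beta> / Gamma (C + real n)"
    unfolding Beta_def A_def C_def by (simp add: algebra_simps)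
  have R1: "poch_r \<alpha> k = Gamma A / Gamma \<alpha>" by (simp add: poch_r_def A_def)
  have R2: "poch_r (\<alpha> + \<beta>) k = Gamma C / Gamma E" by (simp add: poch_r_def C_def E_def)
  have B2: "Beta \<alpha> \<beta> = Gamma \<alpha> * Gamma \<beta> / Gamma E" by (simp add: Beta_def E_def)
  have ne: "Gamma A \<noteq> 0" "Gamma C \<noteq> 0" "Gamma E \<noteq> 0" "Gamma (A + real n) \<noteq> 0" "Gamma (C + real n) \<noteq> 0"
    "Gamma \<alpha> \<noteq> 0" "Gamma \<beta> \<noteq> 0"
    using p ab by (auto intro!: Gamma_ne)
  show ?thesis
    unfolding P1 P2 B1 R1 R2 B2
    using ne by (simp add: field_simps)
qed

lemma coefO:
  assumes ab: "\<alpha> > 0" "\<beta> > 0" and k: "k > -\<alpha>"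
  shows "poch_r \<alpha> k / poch_r (\<alpha> + \<beta>) k * (poch_r (\<alpha> + k) (1/2) / poch_r (\<alpha> + \<beta> + k) (1/2))
       * pochhammer (\<alpha> + k + 1/2) n / pochhammer (\<alpha> + \<beta> + k + 1/2) n
       = Beta (\<alpha> + k + real (2 * n + 1) / 2) \<beta> / Beta \<alpha> \<beta>"
proof -
  define A where "A = \<alpha> + k"
  define C where "C = \<alpha> + \<beta> + k"
  define E where "E = \<alpha> + \<beta>"
  have p: "A > 0" "C > 0" "E > 0" "A + 1/2 > 0" "C + 1/2 > 0" "A + 1/2 + real n > 0" "C + 1/2 + real n > 0"
    using ab k by (auto simp: A_def C_def E_def)
  have P1: "pochhammer (\<alpha> + k + 1/2) n = Gamma (A + 1/2 + real n) / Gamma (A + 1/2)" using poch_real_Gamma[OF p(4)] by (simp add: A_def)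
  have P2: "pochhammer (\<alpha> + \<beta> + k + 1/2) n = Gamma (C + 1/2 + real n) / Gamma (C + 1/2)" using poch_real_Gamma[OF p(5)] by (simp add: C_def)
  have B1: "Beta (\<alpha> + k + real (2 * n + 1) / 2) \<beta> = Gamma (A + 1/2 + real n) * Gamma \<beta> / Gamma (C + 1/2 + real n)"
    unfolding Beta_def A_def C_def by (simp add: algebra_simps add_divide_distrib)
  have R1: "poch_r \<alpha> k = Gamma A / Gamma \<alpha>" by (simp add: poch_r_def A_def)
  have R2: "poch_r (\<alpha> + \<beta>) k = Gamma C / Gamma E" by (simp add: poch_r_def C_def E_def)
  have R3: "poch_r (\<alpha> + k) (1/2) = Gamma (A + 1/2) / Gamma A" by (simp add: poch_r_def A_def)
  have R4: "poch_r (\<alpha> + \<beta> + k) (1/2) = Gamma (C + 1/2) / Gamma C" by (simp add: poch_r_def C_def)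
  have B2: "Beta \<alpha> \<beta> = Gamma \<alpha> * Gamma \<beta> / Gamma E" by (simp add: Beta_def E_def)
  have ne: "Gamma A \<noteq> 0" "Gamma C \<noteq> 0" "Gamma E \<noteq> 0" "Gamma (A + 1/2) \<noteq> 0" "Gamma (C + 1/2) \<noteq> 0"
    "Gamma (A + 1/2 + real n) \<noteq> 0" "Gamma (C + 1/2 + real n) \<noteq> 0"
    "Gamma \<alpha> \<noteq> 0" "Gamma \<beta> \<noteq> 0"
    using p ab by (auto intro!: Gamma_ne)
  show ?thesis
    unfolding P1 P2 B1 R1 R2 R3 R4 B2
    using ne by (simp add: field_simps)
qed

lemma fact_even: "(fact (2 * n) :: complex) = 4 ^ n * pochhammer (1/2) n * fact n"
proof -
  have "(fact (2 * n) :: complex) = pochhammer (2 * (1/2)) (2 * n)" by (simp add: pochhammer_fact)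
  also have "\<dots> = of_nat (2 ^ (2 * n)) * pochhammer (1/2) n * pochhammer (1/2 + 1/2) n"
    by (rule pochhammer_double)
  also have "\<dots> = 4 ^ n * pochhammer (1/2) n * fact n"
    by (simp add: pochhammer_fact power_mult)
  finally show ?thesis .
qed

lemma fact_odd: "(fact (2 * n + 1) :: complex) = 4 ^ n * pochhammer (3/2) n * fact n"
proof -
  have "(fact (2 * n + 1) :: complex) = pochhammer 1 (Suc (2 * n))" by (simp add: pochhammer_fact)
  also have "\<dots> = pochhammer 2 (2 * n)" by (simp add: pochhammer_rec)
  also have "\<dots> = pochhammer (2 * 1) (2 * n)" by simp
  also have "\<dots> = of_nat (2 ^ (2 * n)) * pochhammer 1 n * pochhammer (1 + 1/2) n"
    by (rule pochhammer_double)
  also have "\<dots> = 4 ^ n * pochhammer (3/2) n * fact n"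
    by (simp add: pochhammer_fact power_mult)
  finally show ?thesis .
qed

lemma poch_half_ne: "pochhammer (1/2 :: complex) n \<noteq> 0" "pochhammer (3/2 :: complex) n \<noteq> 0"
proof -
  have "pochhammer (of_real (1/2) :: complex) n = of_real (pochhammer (1/2) n)" by (rule pochhammer_of_real)
  moreover have "pochhammer (1/2::real) n > 0" by (rule pochhammer_pos) simp
  ultimately show "pochhammer (1/2 :: complex) n \<noteq> 0" by simp
  have "pochhammer (of_real (3/2) :: complex) n = of_real (pochhammer (3/2) n)" by (rule pochhammer_of_real)
  moreover have "pochhammer (3/2::real) n > 0" by (rule pochhammer_pos) simp
  ultimately show "pochhammer (3/2 :: complex) n \<noteq> 0" by simp
qed

lemma gchoose_even:
  "((-a) gchoose (2 * n) :: complex) = pochhammer (a/2) n * pochhammer ((a+1)/2) n / (pochhammer (1/2) n * fact n)"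
proof -
  have "pochhammer a (2 * n) = pochhammer (2 * (a/2)) (2 * n)" by simp
  also have "\<dots> = of_nat (2 ^ (2 * n)) * pochhammer (a/2) n * pochhammer (a/2 + 1/2) n"
    by (rule pochhammer_double)
  also have "a/2 + 1/2 = (a+1)/2" by (simp add: add_divide_distrib)
  finally have pa: "pochhammer a (2 * n) = 4 ^ n * pochhammer (a/2) n * pochhammer ((a+1)/2) n"
    by (simp add: power_mult)
  have g: "((-a) gchoose (2 * n) :: complex) = pochhammer a (2 * n) / fact (2 * n)"
    by (simp add: gbinomial_pochhammer power_mult)
  show ?thesis
    unfolding g pa fact_even using poch_half_ne(1)[of n]
    by (simp add: field_simps)
qed

lemma gchoose_odd:
  "((-a) gchoose (2 * n + 1) :: complex) = - a * pochhammer ((a+1)/2) n * pochhammer ((a+2)/2) n / (pochhammer (3/2) n * fact n)"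
proof -
  have e2: "2 * ((a+1)/2) = a + 1" by (simp add: field_simps)
  have "pochhammer (a + 1) (2 * n) = pochhammer (2 * ((a+1)/2)) (2 * n)" by (simp only: e2)
  also have "\<dots> = of_nat (2 ^ (2 * n)) * pochhammer ((a+1)/2) n * pochhammer ((a+1)/2 + 1/2) n"
    by (rule pochhammer_double)
  also have "(a+1)/2 + 1/2 = (a+2)/2" by (simp add: add_divide_distrib)
  finally have pa: "pochhammer a (Suc (2 * n)) = a * (4 ^ n * pochhammer ((a+1)/2) n * pochhammer ((a+2)/2) n)"
    by (simp add: power_mult pochhammer_rec)
  have g: "((-a) gchoose (2 * n + 1) :: complex) = - pochhammer a (Suc (2 * n)) / fact (2 * n + 1)"
    by (simp add: gbinomial_pochhammer power_mult)
  show ?thesis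
    unfolding g pa fact_odd using poch_half_ne(2)[of n]
    by (simp add: field_simps)
qed

lemma abs_summ_binom:
  fixes z :: complex assumes z: "norm z < 1"
  shows "summable (\<lambda>m. norm (((-a) gchoose m) * z ^ m))"
proof -
  define \<rho> where "\<rho> = (1 + norm z) / 2"
  have r: "norm z < \<rho>" "\<rho> < 1" using z by (auto simp: \<rho>_def)
  have "summable (\<lambda>m. ((-a) gchoose m) * complex_of_real \<rho> ^ m)"
    using gen_binomial_complex[of "complex_of_real \<rho>" "-a"] r norm_ge_zero[of z]
    by (intro sums_summable) auto
  then show ?thesis
    by (rule powser_insidea) (use r norm_ge_zero[of z] in auto)
qed

lemma FF_series_raw:
  assumes D: "distributed M lborel \<xi> (\<lambda>x. ennreal (beta_density \<alpha> \<beta> x))"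
    and ab: "\<alpha> > 0" "\<beta> > 0" and k: "k > -\<alpha>" and z: "norm z < 1"
  shows "(\<lambda>m. ((-a) gchoose m) * z ^ m * complex_of_real (Beta (\<alpha> + k + real m / 2) \<beta> / Beta \<alpha> \<beta>))
           sums FF M \<xi> k a z"
    and "summable (\<lambda>m. norm (((-a) gchoose m) * z ^ m * complex_of_real (Beta (\<alpha> + k + real m / 2) \<beta> / Beta \<alpha> \<beta>)))"
proof -
  define w where "w = (\<lambda>x. beta_density \<alpha> \<beta> x * x powr k)"
  define c where "c = (\<lambda>m. ((-a) gchoose m) :: complex)"
  define f where "f = (\<lambda>m x. w x *\<^sub>R (c m * (z * complex_of_real (sqrt x)) ^ m))"
  have wi: "integrable lborel w" unfolding w_def by (rule w_integrable[OF ab k])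
  have w0: "\<And>x. x \<notin> {0..1} \<Longrightarrow> w x = 0" unfolding w_def by (rule w_zero)
  have wnn: "w x \<ge> 0" for x
    unfolding w_def using bd_nonneg[OF ab, of x] by (auto simp: beta_density_def)
  have S: "summable (\<lambda>m. norm (c m * z ^ m))" unfolding c_def by (rule abs_summ_binom[OF z])
  have fi: "integrable lborel (f m)" for m
    unfolding f_def by (rule wint) (use wi w0 in \<open>auto intro!: continuous_intros\<close>)
  have fb: "norm (f m x) \<le> w x * norm (c m * z ^ m)" for m x
  proof (cases "x \<in> {0..1}")
    case True
    have "sqrt x ^ m \<le> 1" using True by (intro power_le_one) auto
    then have "norm (c m * z ^ m) * sqrt x ^ m \<le> norm (c m * z ^ m)"
      using True by (intro mult_right_le_one_le) auto
    then have "w x * (norm (c m * z ^ m) * sqrt x ^ m) \<le> w x * norm (c m * z ^ m)"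
      by (intro mult_left_mono wnn)
    then show ?thesis using True wnn[of x]
      by (simp add: f_def norm_mult power_mult_distrib norm_power abs_mult mult_ac)
  qed (simp add: f_def w0)
  have fs: "(\<lambda>m. f m x) sums (w x *\<^sub>R (1 + z * complex_of_real (sqrt x)) powr (-a))" for x
  proof (cases "x \<in> {0..1}")
    case True
    have "norm (z * complex_of_real (sqrt x)) \<le> norm z * 1"
      unfolding norm_mult using True by (intro mult_left_mono) auto
    then have "norm (z * complex_of_real (sqrt x)) < 1" using z by simp
    from gen_binomial_complex[OF this, of "-a"]
    have "(\<lambda>m. c m * (z * complex_of_real (sqrt x)) ^ m) sums (1 + z * complex_of_real (sqrt x)) powr (-a)"
      by (simp add: c_def)
    from sums_mult[OF this, of "complex_of_real (w x)"]
    show ?thesis by (simp add: f_def scaleR_conv_of_real)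
  next
    case False
    then show ?thesis by (simp add: f_def w0)
  qed
  have int_eq: "integral\<^sup>L lborel (f m) = c m * z ^ m * complex_of_real (Beta (\<alpha> + k + real m / 2) \<beta> / Beta \<alpha> \<beta>)" for m
  proof -
    have "integral\<^sup>L lborel (f m) = (LINT x|lborel. c m * z ^ m * complex_of_real (w x * sqrt x ^ m))"
      by (rule Bochner_Integration.integral_cong) (simp_all add: f_def scaleR_conv_of_real power_mult_distrib mult_ac)
    also have "\<dots> = c m * z ^ m * complex_of_real (LINT x|lborel. w x * sqrt x ^ m)"
      by (simp only: integral_mult_right_zero integral_complex_of_real)
    also have "(LINT x|lborel. w x * sqrt x ^ m) = Beta (\<alpha> + k + real m / 2) \<beta> / Beta \<alpha> \<beta>"
      unfolding w_def by (rule moment[OF ab k])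
    finally show ?thesis .
  qed
  have ni: "integrable lborel (\<lambda>x. w x * norm (c m * z ^ m))" for m
    using wi by auto
  have nb: "(LINT x|lborel. norm (f m x)) \<le> (LINT x|lborel. w x) * norm (c m * z ^ m)" for m
  proof -
    have "(LINT x|lborel. norm (f m x)) \<le> (LINT x|lborel. w x * norm (c m * z ^ m))"
      by (rule integral_mono[OF integrable_norm[OF fi] ni fb])
    then show ?thesis by simp
  qed
  have S2: "summable (\<lambda>m. LINT x|lborel. norm (f m x))"
  proof (rule summable_comparison_test')
    show "summable (\<lambda>m. (LINT x|lborel. w x) * norm (c m * z ^ m))" by (intro summable_mult S)
    fix m
    show "norm (LINT x|lborel. norm (f m x)) \<le> (LINT x|lborel. w x) * norm (c m * z ^ m)"
      using nb[of m] by (simp add: integral_nonneg_AE)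
  qed
  have AEs: "AE x in lborel. summable (\<lambda>m. norm (f m x))"
  proof (rule AE_I2, rule summable_comparison_test')
    fix x
    show "summable (\<lambda>m. w x * norm (c m * z ^ m))" by (intro summable_mult S)
    fix m show "norm (norm (f m x)) \<le> w x * norm (c m * z ^ m)" using fb[of m x] by simp
  qed
  have "FF M \<xi> k a z = (LINT x|lborel. (\<Sum>m. f m x))"
    unfolding FF_eq[OF D ab] using fs by (simp add: sums_iff w_def)
  also have "\<dots> = (\<Sum>m. integral\<^sup>L lborel (f m))"
    by (rule integral_suminf[OF fi AEs S2])
  finally have FFe: "FF M \<xi> k a z = (\<Sum>m. integral\<^sup>L lborel (f m))" .
  have sn: "summable (\<lambda>m. norm (integral\<^sup>L lborel (f m)))"
  proof (rule summable_comparison_test'[OF S2])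
    fix m show "norm (norm (integral\<^sup>L lborel (f m))) \<le> (LINT x|lborel. norm (f m x))"
      by (simp add: integral_norm_bound)
  qed
  show "(\<lambda>m. ((-a) gchoose m) * z ^ m * complex_of_real (Beta (\<alpha> + k + real m / 2) \<beta> / Beta \<alpha> \<beta>))
           sums FF M \<xi> k a z"
  proof -
    have "(\<lambda>m. integral\<^sup>L lborel (f m)) sums FF M \<xi> k a z"
      using summable_norm_cancel[OF sn] FFe by (simp add: summable_sums)
    then show ?thesis by (simp only: int_eq c_def)
  qed
  show "summable (\<lambda>m. norm (((-a) gchoose m) * z ^ m * complex_of_real (Beta (\<alpha> + k + real m / 2) \<beta> / Beta \<alpha> \<beta>)))"
    using sn by (simp only: int_eq c_def)
qed

lemma split2: "{n * 2..<n * 2 + 2} = {2 * n, Suc (2 * n)}" by auto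

lemma FF_ball:
  assumes D: "distributed M lborel \<xi> (\<lambda>x. ennreal (beta_density \<alpha> \<beta> x))"
    and ab: "\<alpha> > 0" "\<beta> > 0" and k: "k > -\<alpha>" and z: "norm z < 1"
  shows "FF M \<xi> k a z =
          complex_of_real (poch_r \<alpha> k / poch_r (\<alpha> + \<beta>) k) *
          (hyp3F2 (a / 2) ((a + 1) / 2) (of_real (\<alpha> + k)) (1 / 2) (of_real (\<alpha> + \<beta> + k)) (z ^ 2)
           - z * a * complex_of_real (poch_r (\<alpha> + k) (1 / 2) / poch_r (\<alpha> + \<beta> + k) (1 / 2))
             * hyp3F2 ((a + 1) / 2) ((a + 2) / 2) (of_real (\<alpha> + k + 1 / 2)) (3 / 2)
                      (of_real (\<alpha> + \<beta> + k + 1 / 2)) (z ^ 2))"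
proof -
  define t where "t = (\<lambda>m. ((-a) gchoose m) * z ^ m * complex_of_real (Beta (\<alpha> + k + real m / 2) \<beta> / Beta \<alpha> \<beta>))"
  define P where "P = poch_r \<alpha> k / poch_r (\<alpha> + \<beta>) k"
  define Q where "Q = poch_r (\<alpha> + k) (1 / 2) / poch_r (\<alpha> + \<beta> + k) (1 / 2)"
  define e where "e = (\<lambda>n. pochhammer (a / 2) n * pochhammer ((a + 1) / 2) n * pochhammer (complex_of_real (\<alpha> + k)) n
            / (pochhammer (1 / 2) n * pochhammer (complex_of_real (\<alpha> + \<beta> + k)) n) * (z ^ 2) ^ n / fact n)"
  define od where "od = (\<lambda>n. pochhammer ((a + 1) / 2) n * pochhammer ((a + 2) / 2) n * pochhammer (complex_of_real (\<alpha> + k + 1 / 2)) n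
            / (pochhammer (3 / 2) n * pochhammer (complex_of_real (\<alpha> + \<beta> + k + 1 / 2)) n) * (z ^ 2) ^ n / fact n)"
  define K where "K = - complex_of_real P * z * a * complex_of_real Q"
  have ts: "t sums FF M \<xi> k a z" and tn: "summable (\<lambda>m. norm (t m))"
    unfolding t_def by (rule FF_series_raw[OF D ab k z])+
  have Ppos: "P > 0" unfolding P_def poch_r_def using ab k
    by (intro divide_pos_pos Gamma_real_pos) auto
  have pp1: "pochhammer (\<alpha> + \<beta> + k) n > 0" "pochhammer (\<alpha> + \<beta> + k + 1/2) n > 0" for n
    using ab k by (auto intro!: pochhammer_pos)
  have te: "t (2 * n) = complex_of_real P * e n" for n
  proof -
    have B: "complex_of_real (Beta (\<alpha> + k + real (2 * n) / 2) \<beta> / Beta \<alpha> \<beta>) =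
          complex_of_real P * pochhammer (complex_of_real (\<alpha> + k)) n / pochhammer (complex_of_real (\<alpha> + \<beta> + k)) n"
      unfolding coefE[OF ab k, of n, symmetric] P_def by (simp only: of_real_mult of_real_divide pochhammer_of_real[symmetric])
    have nz: "pochhammer (complex_of_real (\<alpha> + \<beta> + k)) n \<noteq> 0"
      using pp1(1)[of n] by (simp only: pochhammer_of_real of_real_eq_0_iff) (rule less_imp_neq[symmetric])?
    have "t (2 * n) = ((-a) gchoose (2 * n)) * (z ^ 2) ^ n * complex_of_real (Beta (\<alpha> + k + real (2 * n) / 2) \<beta> / Beta \<alpha> \<beta>)"
      by (simp only: t_def power_mult)
    also have "\<dots> = (pochhammer (a/2) n * pochhammer ((a+1)/2) n / (pochhammer (1/2) n * fact n)) * (z ^ 2) ^ n *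
         (complex_of_real P * pochhammer (complex_of_real (\<alpha> + k)) n / pochhammer (complex_of_real (\<alpha> + \<beta> + k)) n)"
      by (simp only: gchoose_even B)
    also have "\<dots> = complex_of_real P * e n"
      unfolding e_def using nz poch_half_ne(1)[of n] by (simp add: field_simps)
    finally show ?thesis .
  qed
  have to: "t (Suc (2 * n)) = K * od n" for n
  proof -
    have B: "complex_of_real (Beta (\<alpha> + k + real (2 * n + 1) / 2) \<beta> / Beta \<alpha> \<beta>) =
          complex_of_real P * complex_of_real Q * pochhammer (complex_of_real (\<alpha> + k + 1 / 2)) n
            / pochhammer (complex_of_real (\<alpha> + \<beta> + k + 1 / 2)) n"
      unfolding coefO[OF ab k, of n, symmetric] P_def Q_def by (simp only: of_real_mult of_real_divide pochhammer_of_real[symmetric])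
    have nz: "pochhammer (complex_of_real (\<alpha> + \<beta> + k + 1 / 2)) n \<noteq> 0"
      using pp1(2)[of n] by (simp only: pochhammer_of_real of_real_eq_0_iff) (rule less_imp_neq[symmetric])?
    have "t (Suc (2 * n)) = ((-a) gchoose (2 * n + 1)) * (z * (z ^ 2) ^ n) * complex_of_real (Beta (\<alpha> + k + real (2 * n + 1) / 2) \<beta> / Beta \<alpha> \<beta>)"
    proof -
      have zp: "z ^ (2 * n + 1) = z * (z ^ 2) ^ n" by (simp add: power_mult)
      show ?thesis by (simp only: t_def Suc_eq_plus1 zp)
    qed
    also have "\<dots> = (- a * pochhammer ((a+1)/2) n * pochhammer ((a+2)/2) n / (pochhammer (3/2) n * fact n)) * (z * (z ^ 2) ^ n) *
         (complex_of_real P * complex_of_real Q * pochhammer (complex_of_real (\<alpha> + k + 1 / 2)) n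
            / pochhammer (complex_of_real (\<alpha> + \<beta> + k + 1 / 2)) n)"
      by (simp only: gchoose_odd B)
    also have "\<dots> = K * od n"
      unfolding od_def K_def using nz poch_half_ne(2)[of n] by (simp add: field_simps)
    finally show ?thesis .
  qed
  have gn: "(\<lambda>n. norm (t (2 * n)) + norm (t (Suc (2 * n)))) sums (\<Sum>m. norm (t m))"
    using sums_group[OF summable_sums[OF tn], of 2] by (simp add: split2 mult.commute)
  have g: "(\<lambda>n. t (2 * n) + t (Suc (2 * n))) sums FF M \<xi> k a z"
    using sums_group[OF ts, of 2] by (simp add: split2 mult.commute)
  have se: "summable (\<lambda>n. t (2 * n))"
    by (rule summable_comparison_test'[OF sums_summable[OF gn]]) simp
  have so: "summable (\<lambda>n. t (Suc (2 * n)))"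
    by (rule summable_comparison_test'[OF sums_summable[OF gn]]) simp
  have FFs: "FF M \<xi> k a z = (\<Sum>n. t (2 * n)) + (\<Sum>n. t (Suc (2 * n)))"
    using sums_unique[OF g] suminf_add[OF se so] by simp
  have Pn: "complex_of_real P \<noteq> 0" using Ppos by simp
  have sumE: "(\<Sum>n. t (2 * n)) = complex_of_real P * suminf e"
  proof -
    have "summable (\<lambda>n. t (2 * n) / complex_of_real P)" by (rule summable_divide[OF se])
    moreover have "(\<lambda>n. t (2 * n) / complex_of_real P) = e" using Pn by (simp add: te fun_eq_iff)
    ultimately have "summable e" by simp
    then show ?thesis by (simp add: te suminf_mult)
  qed
  have sumO: "(\<Sum>n. t (Suc (2 * n))) = K * suminf od"
  proof (cases "K = 0")
    case True then show ?thesis by (simp add: to)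
  next
    case False
    have "summable (\<lambda>n. t (Suc (2 * n)) / K)" by (rule summable_divide[OF so])
    moreover have "(\<lambda>n. t (Suc (2 * n)) / K) = od" using False by (simp add: to fun_eq_iff)
    ultimately have "summable od" by simp
    then show ?thesis by (simp add: to suminf_mult)
  qed
  have H1: "hyp3F2 (a / 2) ((a + 1) / 2) (of_real (\<alpha> + k)) (1 / 2) (of_real (\<alpha> + \<beta> + k)) (z ^ 2) = suminf e"
    unfolding hyp3F2_def e_def ..
  have H2: "hyp3F2 ((a + 1) / 2) ((a + 2) / 2) (of_real (\<alpha> + k + 1 / 2)) (3 / 2) (of_real (\<alpha> + \<beta> + k + 1 / 2)) (z ^ 2) = suminf od"
    unfolding hyp3F2_def od_def ..
  show ?thesis
    unfolding H1 H2 FFs sumE sumO P_def[symmetric] Q_def[symmetric] K_def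
    by (simp add: algebra_simps)
qed

lemma h32a: "(\<And>n. pochhammer c n \<noteq> 0) \<Longrightarrow> hyp3F2 c e b c d t = hyp2F1 e b d t"
  unfolding hyp3F2_def hyp2F1_def
  by (rule arg_cong[where f=suminf]) (simp add: fun_eq_iff field_simps)

lemma h32b: "(\<And>n. pochhammer c n \<noteq> 0) \<Longrightarrow> hyp3F2 e c b c d t = hyp2F1 e b d t"
  unfolding hyp3F2_def hyp2F1_def
  by (rule arg_cong[where f=suminf]) (simp add: fun_eq_iff field_simps)

lemma poch_r0: "x > 0 \<Longrightarrow> poch_r x 0 = 1"
  unfolding poch_r_def using Gamma_ne[of x] by simp

lemma AE_pos:
  assumes D: "distributed M lborel \<xi> (\<lambda>x. ennreal (beta_density \<alpha> \<beta> x))"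
  shows "AE \<omega> in M. 0 < \<xi> \<omega> \<and> \<xi> \<omega> < 1"
proof -
  have "AE x in distr M lborel \<xi>. 0 < x \<and> x < 1"
    unfolding distributed_distr_eq_density[OF D]
    by (subst AE_density) (auto simp: beta_density_def)
  then show ?thesis
    by (subst (asm) AE_distr_iff) (use distributed_measurable[OF D] in auto)
qed

theorem lemma6p2:
  fixes M :: "'w measure" and \<xi> :: "'w \<Rightarrow> real"
    and \<alpha> \<beta> k :: real and a :: complex
  assumes "prob_space M"
    and "\<alpha> > 0" and "\<beta> > 0"
    and "distributed M lborel \<xi> (\<lambda>x. ennreal (beta_density \<alpha> \<beta> x))"
    and "k > - \<alpha>"
  shows
   "(\<exists>F S. open S \<and> connected S \<and> ball 0 1 \<subseteq> S \<and> complex_of_real ` {-1<..} \<subseteq> S \<and>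
       F holomorphic_on S \<and>
       (\<forall>z\<in>ball 0 1. F z =
          complex_of_real (poch_r \<alpha> k / poch_r (\<alpha> + \<beta>) k) *
          (hyp3F2 (a / 2) ((a + 1) / 2) (of_real (\<alpha> + k)) (1 / 2) (of_real (\<alpha> + \<beta> + k)) (z ^ 2)
           - z * a * complex_of_real (poch_r (\<alpha> + k) (1 / 2) / poch_r (\<alpha> + \<beta> + k) (1 / 2))
             * hyp3F2 ((a + 1) / 2) ((a + 2) / 2) (of_real (\<alpha> + k + 1 / 2)) (3 / 2)
                      (of_real (\<alpha> + \<beta> + k + 1 / 2)) (z ^ 2))) \<and>
       (\<forall>s::real. s > -1 \<longrightarrow>
          F (complex_of_real s) =
          integral\<^sup>L M (\<lambda>\<omega>. complex_of_real (\<xi> \<omega> powr k)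
                              / (complex_of_real (1 + s * sqrt (\<xi> \<omega>))) powr a)))
    \<and> (\<forall>p::nat. p \<ge> 2 \<longrightarrow> \<beta> = (real p - 1) * \<alpha> \<longrightarrow>
       (\<exists>F S. open S \<and> connected S \<and> ball 0 1 \<subseteq> S \<and> complex_of_real ` {-1<..} \<subseteq> S \<and>
         F holomorphic_on S \<and>
         (\<forall>z\<in>ball 0 1. F z =
            hyp2F1 1 (of_real \<alpha>) (of_real (real p * \<alpha>)) (z ^ 2)
            - z * complex_of_real (poch_r \<alpha> (1 / 2) / poch_r (real p * \<alpha>) (1 / 2))
              * hyp2F1 1 (of_real (\<alpha> + 1 / 2)) (of_real (real p * \<alpha> + 1 / 2)) (z ^ 2)) \<and>
         (\<forall>s::real. s > -1 \<longrightarrow>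
            F (complex_of_real s) =
            complex_of_real (integral\<^sup>L M (\<lambda>\<omega>. 1 / (1 + s * sqrt (\<xi> \<omega>)))))))"
proof -
  note D = assms(4) and ab = assms(2,3) and k = assms(5)
  define S where "S = {z::complex. Re z > -1}"
  have S: "open S" "connected S" "ball 0 1 \<subseteq> S" "complex_of_real ` {-1<..} \<subseteq> S"
  proof -
    show "open S" unfolding S_def by (rule open_halfspace_Re_gt)
    show "connected S" unfolding S_def by (rule connected_halfspace_Re_gt)
    show "ball 0 1 \<subseteq> S"
    proof
      fix z :: complex assume "z \<in> ball 0 1"
      then have "norm z < 1" by simp
      moreover have "\<bar>Re z\<bar> \<le> norm z" by (rule abs_Re_le_cmod)
      ultimately show "z \<in> S" by (simp add: S_def)
    qed
    show "complex_of_real ` {-1<..} \<subseteq> S" by (auto simp: S_def)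
  qed
  have P1: "\<exists>F S. open S \<and> connected S \<and> ball 0 1 \<subseteq> S \<and> complex_of_real ` {-1<..} \<subseteq> S \<and>
       F holomorphic_on S \<and>
       (\<forall>z\<in>ball 0 1. F z =
          complex_of_real (poch_r \<alpha> k' / poch_r (\<alpha> + \<beta>) k') *
          (hyp3F2 (a' / 2) ((a' + 1) / 2) (of_real (\<alpha> + k')) (1 / 2) (of_real (\<alpha> + \<beta> + k')) (z ^ 2)
           - z * a' * complex_of_real (poch_r (\<alpha> + k') (1 / 2) / poch_r (\<alpha> + \<beta> + k') (1 / 2))
             * hyp3F2 ((a' + 1) / 2) ((a' + 2) / 2) (of_real (\<alpha> + k' + 1 / 2)) (3 / 2)
                      (of_real (\<alpha> + \<beta> + k' + 1 / 2)) (z ^ 2))) \<and>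
       (\<forall>s::real. s > -1 \<longrightarrow> F (complex_of_real s) = FF M \<xi> k' a' (complex_of_real s))"
    if k': "k' > -\<alpha>" for k' a'
    by (intro exI[of _ "FF M \<xi> k' a'"] exI[of _ S] conjI S ballI allI impI refl
        FF_holo[OF D ab k', folded S_def] FF_ball[OF D ab k']) auto
  have FFr: "FF M \<xi> k a (complex_of_real s) = integral\<^sup>L M (\<lambda>\<omega>. complex_of_real (\<xi> \<omega> powr k)
                              / (complex_of_real (1 + s * sqrt (\<xi> \<omega>))) powr a)" for s
    by (simp add: FF_def)
  have xm[measurable]: "\<xi> \<in> borel_measurable M" using distributed_measurable[OF D] by simp
  show ?thesis
  proof (intro conjI allI impI)
    show "\<exists>F S. open S \<and> connected S \<and> ball 0 1 \<subseteq> S \<and> complex_of_real ` {-1<..} \<subseteq> S \<and>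
       F holomorphic_on S \<and>
       (\<forall>z\<in>ball 0 1. F z =
          complex_of_real (poch_r \<alpha> k / poch_r (\<alpha> + \<beta>) k) *
          (hyp3F2 (a / 2) ((a + 1) / 2) (of_real (\<alpha> + k)) (1 / 2) (of_real (\<alpha> + \<beta> + k)) (z ^ 2)
           - z * a * complex_of_real (poch_r (\<alpha> + k) (1 / 2) / poch_r (\<alpha> + \<beta> + k) (1 / 2))
             * hyp3F2 ((a + 1) / 2) ((a + 2) / 2) (of_real (\<alpha> + k + 1 / 2)) (3 / 2)
                      (of_real (\<alpha> + \<beta> + k + 1 / 2)) (z ^ 2))) \<and>
       (\<forall>s::real. s > -1 \<longrightarrow>
          F (complex_of_real s) =
          integral\<^sup>L M (\<lambda>\<omega>. complex_of_real (\<xi> \<omega> powr k)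
                              / (complex_of_real (1 + s * sqrt (\<xi> \<omega>))) powr a))"
      using P1[OF k, of a] by (simp only: FFr)
  next
    fix p :: nat assume p: "p \<ge> 2" and bp: "\<beta> = (real p - 1) * \<alpha>"
    have apb: "\<alpha> + \<beta> = real p * \<alpha>" using bp by (simp add: algebra_simps)
    have a0: "0 > -\<alpha>" using ab by simp
    obtain F S' where F: "open S'" "connected S'" "ball 0 1 \<subseteq> S'" "complex_of_real ` {-1<..} \<subseteq> S'"
       "F holomorphic_on S'"
       "\<And>z. z \<in> ball 0 1 \<Longrightarrow> F z =
          complex_of_real (poch_r \<alpha> 0 / poch_r (\<alpha> + \<beta>) 0) *
          (hyp3F2 (1 / 2) ((1 + 1) / 2) (of_real (\<alpha> + 0)) (1 / 2) (of_real (\<alpha> + \<beta> + 0)) (z ^ 2)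
           - z * 1 * complex_of_real (poch_r (\<alpha> + 0) (1 / 2) / poch_r (\<alpha> + \<beta> + 0) (1 / 2))
             * hyp3F2 ((1 + 1) / 2) ((1 + 2) / 2) (of_real (\<alpha> + 0 + 1 / 2)) (3 / 2)
                      (of_real (\<alpha> + \<beta> + 0 + 1 / 2)) (z ^ 2))"
       "\<And>s::real. s > -1 \<Longrightarrow> F (complex_of_real s) = FF M \<xi> 0 1 (complex_of_real s)"
      using P1[OF a0, of 1] by blast
    have e1: "((1::complex) + 1) / 2 = 1" by simp
    have e2: "((1::complex) + 2) / 2 = 3 / 2" by simp
    have pr1: "poch_r \<alpha> 0 = 1" "poch_r (real p * \<alpha>) 0 = 1"
      using ab p by (auto intro!: poch_r0)
    show "\<exists>F S. open S \<and> connected S \<and> ball 0 1 \<subseteq> S \<and> complex_of_real ` {-1<..} \<subseteq> S \<and>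
         F holomorphic_on S \<and>
         (\<forall>z\<in>ball 0 1. F z =
            hyp2F1 1 (of_real \<alpha>) (of_real (real p * \<alpha>)) (z ^ 2)
            - z * complex_of_real (poch_r \<alpha> (1 / 2) / poch_r (real p * \<alpha>) (1 / 2))
              * hyp2F1 1 (of_real (\<alpha> + 1 / 2)) (of_real (real p * \<alpha> + 1 / 2)) (z ^ 2)) \<and>
         (\<forall>s::real. s > -1 \<longrightarrow>
            F (complex_of_real s) =
            complex_of_real (integral\<^sup>L M (\<lambda>\<omega>. 1 / (1 + s * sqrt (\<xi> \<omega>)))))"
    proof (intro exI[of _ F] exI[of _ S'] conjI ballI allI impI F(1-5))
      fix z :: complex assume z: "z \<in> ball 0 1"
      show "F z = hyp2F1 1 (of_real \<alpha>) (of_real (real p * \<alpha>)) (z ^ 2)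
            - z * complex_of_real (poch_r \<alpha> (1 / 2) / poch_r (real p * \<alpha>) (1 / 2))
              * hyp2F1 1 (of_real (\<alpha> + 1 / 2)) (of_real (real p * \<alpha> + 1 / 2)) (z ^ 2)"
        unfolding F(6)[OF z]
        by (simp only: add_0_right apb pr1 e1 e2 div_by_1 of_real_1 mult_1_left mult_1_right
              h32a[OF poch_half_ne(1)] h32b[OF poch_half_ne(2)])
    next
      fix s :: real assume s: "s > -1"
      have "FF M \<xi> 0 1 (complex_of_real s) =
            (\<integral>\<omega>. complex_of_real (\<xi> \<omega> powr 0) / (1 + complex_of_real s * complex_of_real (sqrt (\<xi> \<omega>))) \<partial>M)"
        by (simp add: FF_def powr_to_1)
      also have "\<dots> = (\<integral>\<omega>. complex_of_real (1 / (1 + s * sqrt (\<xi> \<omega>))) \<partial>M)"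
      proof (rule integral_cong_AE)
        show "AE \<omega> in M. complex_of_real (\<xi> \<omega> powr 0) / (1 + complex_of_real s * complex_of_real (sqrt (\<xi> \<omega>))) =
              complex_of_real (1 / (1 + s * sqrt (\<xi> \<omega>)))"
          using AE_pos[OF D] by eventually_elim simp
      qed measurable
      also have "\<dots> = complex_of_real (integral\<^sup>L M (\<lambda>\<omega>. 1 / (1 + s * sqrt (\<xi> \<omega>))))"
        by (rule integral_complex_of_real)
      finally show "F (complex_of_real s) = complex_of_real (integral\<^sup>L M (\<lambda>\<omega>. 1 / (1 + s * sqrt (\<xi> \<omega>))))"
        using F(7)[OF s] by simp
    qed
  qed
qed

end
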